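(* Let $d:\mathbb{Z}\to\mathbb{C}$ with $d(n)\to0$ as $|n|\to\infty$, and let $(Ju)(n)=u(n-1)+d(n)u(n)+u(n+1)$ on $\ell^2(\mathbb{Z})$. Suppose that (i) for every $n\in\mathbb{Z}$, $\Im(d(n))=0$ or $\Im(d(n+1))=0$; (ii) $\Im(d(n))\ne0$ for infinitely many $n\in\mathbb{Z}$. If $\sum_{k\in\mathbb{Z}}|k|\,|\Re(d(k))|<\infty$, then $J$ has no boundary eigenvalues.
   Context: The numerical range is $\operatorname{Num}(J)=\{\langle Ju,u\rangle:\|u\|=1\}$, and a boundary eigenvalue of $J$ is an eigenvalue of $J$ lying in the topological boundary of $\operatorname{Num}(J)$. *)

theory Defs
  imports "HOL-Analysis.Analysis"
begin

definition l2Z :: "(int \<Rightarrow> complex) set" where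
  "l2Z = {u. (\<lambda>n. (cmod (u n))\<^sup>2) summable_on UNIV}"

definition jacobi :: "(int \<Rightarrow> complex) \<Rightarrow> (int \<Rightarrow> complex) \<Rightarrow> int \<Rightarrow> complex" where
  "jacobi d u n = u (n - 1) + d n * u n + u (n + 1)"

definition l2Z_inner :: "(int \<Rightarrow> complex) \<Rightarrow> (int \<Rightarrow> complex) \<Rightarrow> complex" where
  "l2Z_inner v u = (\<Sum>\<^sub>\<infinity>n. v n * cnj (u n))"

definition l2Z_norm :: "(int \<Rightarrow> complex) \<Rightarrow> real" where
  "l2Z_norm u = sqrt (\<Sum>\<^sub>\<infinity>n. (cmod (u n))\<^sup>2)"

definition numrange :: "(int \<Rightarrow> complex) \<Rightarrow> complex set" where
  "numrange d = {l2Z_inner (jacobi d u) u | u. u \<in> l2Z \<and> l2Z_norm u = 1}"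

definition is_eigenvalue :: "(int \<Rightarrow> complex) \<Rightarrow> complex \<Rightarrow> bool" where
  "is_eigenvalue d mu \<longleftrightarrow> (\<exists>u\<in>l2Z. u \<noteq> (\<lambda>_. 0) \<and> jacobi d u = (\<lambda>n. mu * u n))"

definition boundary_eigenvalue :: "(int \<Rightarrow> complex) \<Rightarrow> complex \<Rightarrow> bool" where
  "boundary_eigenvalue d mu \<longleftrightarrow> is_eigenvalue d mu \<and> mu \<in> frontier (numrange d)"

end

theory Submission
  imports Defs "HOL-Analysis.Analysis"
begin


lemma l2Z_iff: "u \<in> l2Z \<longleftrightarrow> (\<lambda>n. (cmod (u n))\<^sup>2) summable_on UNIV"
  by (simp add: l2Z_def)

lemma l2_prod_abs: 
  assumes "u \<in> l2Z" "v \<in> l2Z"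
  shows "(\<lambda>n. norm (u n * cnj (v n))) summable_on UNIV"
proof -
  have s: "(\<lambda>n. (cmod (u n))\<^sup>2 + (cmod (v n))\<^sup>2) summable_on UNIV"
    using assms by (intro summable_on_add) (auto simp: l2Z_iff)
  show ?thesis
  proof (rule Infinite_Sum.abs_summable_on_comparison_test'[OF s])
    fix n
    have "cmod (u n) * cmod (v n) \<le> (cmod (u n))\<^sup>2 + (cmod (v n))\<^sup>2"
      using sum_squares_bound[of "cmod (u n)" "cmod (v n)"] 
        mult_nonneg_nonneg[of "cmod (u n)" "cmod (v n)", OF norm_ge_zero norm_ge_zero]
      by linarith
    then show "norm (u n * cnj (v n)) \<le> (cmod (u n))\<^sup>2 + (cmod (v n))\<^sup>2"
      by (simp add: norm_mult)
  qed
qed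

lemma l2_prod: "u \<in> l2Z \<Longrightarrow> v \<in> l2Z \<Longrightarrow> (\<lambda>n. u n * cnj (v n)) summable_on UNIV"
  by (rule abs_summable_summable) (rule l2_prod_abs)

lemma l2_add: 
  assumes "u \<in> l2Z" "v \<in> l2Z" shows "(\<lambda>n. u n + v n) \<in> l2Z"
proof -
  have s: "(\<lambda>n. 2*(cmod (u n))\<^sup>2 + 2*(cmod (v n))\<^sup>2) summable_on UNIV"
    using assms by (intro summable_on_add summable_on_cmult_right) (auto simp: l2Z_iff)
  have "(\<lambda>n. (cmod (u n + v n))\<^sup>2) summable_on UNIV"
  proof (rule summable_on_comparison_test[OF s])
    fix n
    have "cmod (u n + v n) \<le> cmod (u n) + cmod (v n)" by (rule norm_triangle_ineq)
    then have "(cmod (u n + v n))\<^sup>2 \<le> (cmod (u n) + cmod (v n))\<^sup>2"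
      by (simp add: power_mono)
    also have "\<dots> \<le> 2*(cmod (u n))\<^sup>2 + 2*(cmod (v n))\<^sup>2"
      using sum_squares_bound[of "cmod (u n)" "cmod (v n)"] power2_sum[of "cmod (u n)" "cmod (v n)"]
      by simp
    finally show "(cmod (u n + v n))\<^sup>2 \<le> 2*(cmod (u n))\<^sup>2 + 2*(cmod (v n))\<^sup>2" .
  qed auto
  then show ?thesis by (simp add: l2Z_iff)
qed

lemma l2_mult_bounded:
  assumes "u \<in> l2Z" "\<And>n. cmod (c n) \<le> B" shows "(\<lambda>n. c n * u n) \<in> l2Z"
proof -
  have s: "(\<lambda>n. B\<^sup>2 * (cmod (u n))\<^sup>2) summable_on UNIV"
    using assms by (intro summable_on_cmult_right) (auto simp: l2Z_iff)
  have "(\<lambda>n. (cmod (c n * u n))\<^sup>2) summable_on UNIV"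
  proof (rule summable_on_comparison_test[OF s])
    fix n
    have "cmod (c n) \<le> B" by (rule assms)
    then have "(cmod (c n))\<^sup>2 \<le> B\<^sup>2" by (simp add: power_mono)
    then show "(cmod (c n * u n))\<^sup>2 \<le> B\<^sup>2 * (cmod (u n))\<^sup>2"
      by (simp add: norm_mult power_mult_distrib mult_right_mono)
  qed auto
  then show ?thesis by (simp add: l2Z_iff)
qed

lemma l2_cmult: "u \<in> l2Z \<Longrightarrow> (\<lambda>n. c * u n) \<in> l2Z"
  using l2_mult_bounded[of u "\<lambda>_. c" "cmod c"] by simp

lemma bij_shift: "bij_betw (\<lambda>n::int. n + k) UNIV UNIV"
  by (rule bij_betwI[where g="\<lambda>n. n - k"]) auto

lemma l2_shift: assumes "u \<in> l2Z" shows "(\<lambda>n. u (n + k)) \<in> l2Z"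
  using assms summable_on_reindex_bij_betw[OF bij_shift[of k], of "\<lambda>n. (cmod (u n))\<^sup>2"]
  by (simp add: l2Z_iff)

lemma l2_shiftm: assumes "u \<in> l2Z" shows "(\<lambda>n. u (n - k)) \<in> l2Z"
  using l2_shift[OF assms, of "-k"] by simp

lemma jacobi_l2:
  assumes "u \<in> l2Z" "\<And>n. cmod (d n) \<le> B" shows "jacobi d u \<in> l2Z"
  unfolding jacobi_def
  by (intro l2_add l2_shift[OF assms(1)] l2_shiftm[OF assms(1)] l2_mult_bounded[OF assms(1) assms(2)])

lemma inner_add_left:
  assumes "u \<in> l2Z" "v \<in> l2Z" "w \<in> l2Z"
  shows "l2Z_inner (\<lambda>n. u n + v n) w = l2Z_inner u w + l2Z_inner v w"
  unfolding l2Z_inner_def using infsum_add[OF l2_prod[OF assms(1,3)] l2_prod[OF assms(2,3)]]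
  by (simp add: distrib_right)

lemma inner_cnj: "cnj (l2Z_inner u v) = l2Z_inner v u"
  unfolding l2Z_inner_def by (metis (no_types, lifting) infsum_cnj infsum_cong complex_cnj_cnj complex_cnj_mult mult.commute)

lemma inner_add_right:
  assumes "u \<in> l2Z" "v \<in> l2Z" "w \<in> l2Z"
  shows "l2Z_inner w (\<lambda>n. u n + v n) = l2Z_inner w u + l2Z_inner w v"
  by (metis assms inner_add_left inner_cnj complex_cnj_add)

lemma inner_scale_left: "u \<in> l2Z \<Longrightarrow> v \<in> l2Z \<Longrightarrow> l2Z_inner (\<lambda>n. c * u n) v = c * l2Z_inner u v"
  unfolding l2Z_inner_def
  by (subst infsum_cmult_right[symmetric]) (auto simp: mult.assoc l2_prod)

lemma inner_scale_right: "u \<in> l2Z \<Longrightarrow> v \<in> l2Z \<Longrightarrow> l2Z_inner u (\<lambda>n. c * v n) = cnj c * l2Z_inner u v"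
  by (metis inner_cnj inner_scale_left complex_cnj_mult)

lemma inner_shift: "l2Z_inner (\<lambda>n. u (n + 1)) v = l2Z_inner u (\<lambda>n. v (n - 1))"
  unfolding l2Z_inner_def
  using infsum_reindex_bij_betw[OF bij_shift[of 1], of "\<lambda>n. u n * cnj (v (n - 1))"] by simp

lemma inner_shiftm: "l2Z_inner (\<lambda>n. u (n - 1)) v = l2Z_inner u (\<lambda>n. v (n + 1))"
  unfolding l2Z_inner_def
  using infsum_reindex_bij_betw[OF bij_shift[of "-1"], of "\<lambda>n. u n * cnj (v (n + 1))"] by simp

lemma inner_self_Re: "u \<in> l2Z \<Longrightarrow> l2Z_inner u u = complex_of_real (\<Sum>\<^sub>\<infinity>n. (cmod (u n))\<^sup>2)"
proof -
  assume u: "u \<in> l2Z"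
  have "l2Z_inner u u = (\<Sum>\<^sub>\<infinity>n. complex_of_real ((cmod (u n))\<^sup>2))"
    unfolding l2Z_inner_def by (rule infsum_cong) (simp add: complex_mult_cnj cmod_power2)
  also have "\<dots> = complex_of_real (\<Sum>\<^sub>\<infinity>n. (cmod (u n))\<^sup>2)"
    using has_sum_of_real[OF has_sum_infsum[OF u[unfolded l2Z_iff]]] infsumI by (metis)
  finally show ?thesis .
qed

lemma inner3_left:
  assumes "a \<in> l2Z" "b \<in> l2Z" "c \<in> l2Z" "x \<in> l2Z"
  shows "l2Z_inner (\<lambda>n. p * a n + q * b n + r * c n) x
     = p * l2Z_inner a x + q * l2Z_inner b x + r * l2Z_inner c x"
proof -
  have "l2Z_inner (\<lambda>n. p * a n + q * b n + r * c n) x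
      = l2Z_inner (\<lambda>n. p * a n + q * b n) x + l2Z_inner (\<lambda>n. r * c n) x"
    by (rule inner_add_left) (intro l2_add l2_cmult assms)+
  also have "l2Z_inner (\<lambda>n. p * a n + q * b n) x = l2Z_inner (\<lambda>n. p * a n) x + l2Z_inner (\<lambda>n. q * b n) x"
    by (rule inner_add_left) (intro l2_add l2_cmult assms)+
  finally show ?thesis using assms by (simp add: inner_scale_left)
qed

lemma inner3_right:
  assumes "a \<in> l2Z" "b \<in> l2Z" "c \<in> l2Z" "x \<in> l2Z"
  shows "l2Z_inner x (\<lambda>n. p * a n + q * b n + r * c n)
     = cnj p * l2Z_inner x a + cnj q * l2Z_inner x b + cnj r * l2Z_inner x c"
  by (metis (no_types, lifting) inner3_left[OF assms, of p q r] inner_cnj complex_cnj_add complex_cnj_mult)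

lemma inner_jacobi_left:
  assumes "u \<in> l2Z" "x \<in> l2Z" "\<And>n. cmod (d n) \<le> B"
  shows "l2Z_inner (jacobi d u) x = l2Z_inner u (\<lambda>n. x (n + 1)) + l2Z_inner (\<lambda>n. d n * u n) x
     + l2Z_inner u (\<lambda>n. x (n - 1))"
proof -
  have "l2Z_inner (jacobi d u) x = l2Z_inner (\<lambda>n. 1 * u (n - 1) + 1 * (d n * u n) + 1 * u (n + 1)) x"
    by (simp add: jacobi_def[abs_def])
  also have "\<dots> = 1 * l2Z_inner (\<lambda>n. u (n - 1)) x + 1 * l2Z_inner (\<lambda>n. d n * u n) x
     + 1 * l2Z_inner (\<lambda>n. u (n + 1)) x"
    by (rule inner3_left[OF l2_shiftm[OF assms(1)] l2_mult_bounded[OF assms(1,3)] l2_shift[OF assms(1)] assms(2)])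
  finally have "l2Z_inner (jacobi d u) x = l2Z_inner (\<lambda>n. u (n - 1)) x + l2Z_inner (\<lambda>n. d n * u n) x
     + l2Z_inner (\<lambda>n. u (n + 1)) x" by simp
  then show ?thesis by (simp add: inner_shift inner_shiftm)
qed

lemma infsum_pos_elem:
  fixes f :: "int \<Rightarrow> real"
  assumes "f summable_on UNIV" "\<And>n. f n \<ge> 0" "f n0 > 0"
  shows "(\<Sum>\<^sub>\<infinity>n. f n) > 0"
proof -
  have "infsum f {n0} \<le> infsum f UNIV"
    by (rule infsum_mono_neutral) (auto simp: assms)
  then show ?thesis using assms(3) by simp
qed



lemma geom:
  fixes lam C :: complex and m :: real
  assumes m: "m > 0"
  shows "\<exists>r>0. \<forall>z. cmod (z - lam) < r \<longrightarrow> (\<exists>a b. a\<^sup>2 + (cmod b)\<^sup>2 = 1 \<and>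
            z = of_real (a\<^sup>2) * lam + of_real (a*m) * b + of_real ((cmod b)\<^sup>2) * C)"
proof -
  define K where "K = cmod (C - lam)"
  define s1 where "s1 = min (1/2) (m / (4*(K+1)))"
  define r where "r = m * s1 / 4"
  have K: "K \<ge> 0" unfolding K_def by simp
  have s1pos: "s1 > 0" unfolding s1_def using m K by simp
  have s1h: "s1 \<le> 1/2" unfolding s1_def by (rule min.cobounded1)
  have s1K: "s1 * K \<le> m / 4"
  proof -
    have "s1 \<le> m / (4*(K+1))" unfolding s1_def by simp
    then have "s1 * (4*(K+1)) \<le> m" using K by (simp add: field_simps)
    then have "4*(s1*K) + 4 * s1 \<le> m" by (simp add: algebra_simps)
    then show ?thesis using s1pos by linarith
  qed
  have rpos: "r > 0" unfolding r_def using m s1pos by simp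
  show ?thesis
  proof (rule exI[of _ r], intro conjI allI impI rpos)
    fix z assume z: "cmod (z - lam) < r"
    define g where "g = (\<lambda>s. m * s * sqrt (1 - s\<^sup>2) - cmod (z - lam - of_real (s\<^sup>2) * (C - lam)))"
    have g0: "g 0 \<le> 0" unfolding g_def by simp
    have sq: "1/2 \<le> sqrt (1 - s1\<^sup>2)"
    proof (rule real_le_rsqrt)
      have "s1\<^sup>2 \<le> (1/2)\<^sup>2" using s1h s1pos by (intro power_mono) auto
      then show "(1/2)\<^sup>2 \<le> 1 - s1\<^sup>2" by (simp add: power2_eq_square)
    qed
    have t1: "cmod (z - lam - of_real (s1\<^sup>2) * (C - lam)) \<le> cmod (z - lam) + cmod (of_real (s1\<^sup>2) * (C - lam))"
      by (rule norm_triangle_ineq4)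
    have t2: "cmod (of_real (s1\<^sup>2) * (C - lam)) = s1 * (s1 * K)"
      by (simp add: norm_mult K_def power2_eq_square)
    have t3: "s1 * (s1 * K) \<le> s1 * (m/4)" using s1K s1pos by simp
    have n1: "cmod (z - lam - of_real (s1\<^sup>2) * (C - lam)) \<le> m * s1 / 2"
    proof -
      have e1: "s1 * (m/4) = m * s1 / 4" "m * s1 / 2 = m * s1 / 4 + m * s1 / 4" by simp_all
      show ?thesis using t1 t2 t3 z r_def e1 by linarith
    qed
    have "m * s1 * (1/2) \<le> m * s1 * sqrt (1 - s1\<^sup>2)"
      using sq m s1pos by (intro mult_left_mono) auto
    then have g1: "0 \<le> g s1" unfolding g_def using n1 by simp
    have cont: "continuous_on {0..s1} g" unfolding g_def by (intro continuous_intros)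
    obtain s where s: "0 \<le> s" "s \<le> s1" "g s = 0"
      using IVT'[of g 0 0 s1, OF g0 g1 _ cont] s1pos by auto
    define a where "a = sqrt (1 - s\<^sup>2)"
    have "s\<^sup>2 \<le> (1/2)\<^sup>2" using s s1h by (intro power_mono) auto
    then have s2: "s\<^sup>2 < 1" by (simp add: power2_eq_square)
    then have apos: "a > 0" unfolding a_def by simp
    have a2: "a\<^sup>2 = 1 - s\<^sup>2" unfolding a_def using s2 by simp
    define b where "b = (z - lam - of_real (s\<^sup>2) * (C - lam)) / of_real (a * m)"
    have gs: "cmod (z - lam - of_real (s\<^sup>2) * (C - lam)) = m * s * a"
      using s(3) unfolding g_def a_def by simp
    have bn: "cmod b = s" unfolding b_def using gs apos m s
      by (simp add: norm_divide norm_mult abs_of_pos)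
    have amb: "of_real (a*m) * b = z - lam - of_real (s\<^sup>2) * (C - lam)"
      unfolding b_def using apos m by (simp add: field_simps)
    show "\<exists>a b. a\<^sup>2 + (cmod b)\<^sup>2 = 1 \<and>
            z = of_real (a\<^sup>2) * lam + of_real (a*m) * b + of_real ((cmod b)\<^sup>2) * C"
    proof (intro exI[of _ a] exI[of _ b] conjI)
      show "a\<^sup>2 + (cmod b)\<^sup>2 = 1" using a2 bn by simp
      show "z = of_real (a\<^sup>2) * lam + of_real (a*m) * b + of_real ((cmod b)\<^sup>2) * C"
        unfolding amb bn a2 by (simp add: algebra_simps)
    qed
  qed
qed



lemma interior_lemma:
  fixes d u :: "int \<Rightarrow> complex" and lam :: complex
  assumes dB: "\<And>n. cmod (d n) \<le> B" and u: "u \<in> l2Z" and un: "(\<Sum>\<^sub>\<infinity>n. (cmod (u n))\<^sup>2) = 1"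
    and eig: "jacobi d u = (\<lambda>n. lam * u n)"
    and wnz: "(lam - cnj lam - d n0 + cnj (d n0)) * u n0 \<noteq> 0"
  shows "lam \<in> interior (numrange d)"
proof -
  define c0 where "c0 = lam - cnj lam"
  define du where "du = (\<lambda>n. d n * u n)"
  define cdu where "cdu = (\<lambda>n. cnj (d n) * u n)"
  define w where "w = (\<lambda>n. c0 * u n + (-1) * du n + 1 * cdu n)"
  have du: "du \<in> l2Z" unfolding du_def by (rule l2_mult_bounded[OF u dB])
  have cdu: "cdu \<in> l2Z" unfolding cdu_def by (rule l2_mult_bounded[OF u, of _ B]) (simp add: dB)
  have w: "w \<in> l2Z" unfolding w_def by (intro l2_add l2_cmult u du cdu)
  have wn: "\<And>n. w n = (lam - cnj lam - d n + cnj (d n)) * u n"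
    by (simp add: w_def c0_def du_def cdu_def algebra_simps)
  have Su: "(\<lambda>n. u (n + 1)) \<in> l2Z" "(\<lambda>n. u (n - 1)) \<in> l2Z" using u by (auto intro: l2_shift l2_shiftm)
  have uu: "l2Z_inner u u = 1" using inner_self_Re[OF u] un by simp
  have Ju: "l2Z_inner (jacobi d u) u = lam" using eig inner_scale_left[OF u u, of lam] uu by simp
  have uJu: "l2Z_inner u (jacobi d u) = cnj lam" by (metis Ju inner_cnj)
  have JuL: "l2Z_inner (jacobi d u) u = l2Z_inner u (\<lambda>n. u (n + 1)) + l2Z_inner du u + l2Z_inner u (\<lambda>n. u (n - 1))"
    using inner_jacobi_left[OF u u dB] by (simp add: du_def)
  have JuR: "l2Z_inner u (jacobi d u) = l2Z_inner (\<lambda>n. u (n + 1)) u + l2Z_inner u du + l2Z_inner (\<lambda>n. u (n - 1)) u"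
    by (metis JuL inner_cnj complex_cnj_add)
  have s1: "l2Z_inner (\<lambda>n. u (n + 1)) u = l2Z_inner u (\<lambda>n. u (n - 1))" by (rule inner_shift)
  have s2: "l2Z_inner (\<lambda>n. u (n - 1)) u = l2Z_inner u (\<lambda>n. u (n + 1))" by (rule inner_shiftm)
  have e1: "lam = l2Z_inner u (\<lambda>n. u (n + 1)) + l2Z_inner du u + l2Z_inner u (\<lambda>n. u (n - 1))"
    using Ju JuL by simp
  have e2: "cnj lam = l2Z_inner u (\<lambda>n. u (n - 1)) + l2Z_inner u du + l2Z_inner u (\<lambda>n. u (n + 1))"
    using uJu JuR s1 s2 by simp
  have diff: "c0 = l2Z_inner du u - l2Z_inner u du"
    unfolding c0_def by (subst e2, subst e1, simp add: algebra_simps)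
  have cdu_eq: "l2Z_inner cdu u = l2Z_inner u du"
    unfolding l2Z_inner_def cdu_def du_def by (simp add: mult_ac)
  have wu: "l2Z_inner w u = 0"
    unfolding w_def using inner3_left[OF u du cdu u, of c0 "-1" 1] uu cdu_eq diff by simp
  have uw: "l2Z_inner u w = 0" by (metis inner_cnj wu complex_cnj_zero)
  define dw where "dw = (\<lambda>n. d n * w n)"
  have dw: "dw \<in> l2Z" unfolding dw_def by (rule l2_mult_bounded[OF w dB])
  have Jw: "l2Z_inner (jacobi d w) u = l2Z_inner w w"
  proof -
    have JwL: "l2Z_inner (jacobi d w) u = l2Z_inner w (\<lambda>n. u (n + 1)) + l2Z_inner dw u + l2Z_inner w (\<lambda>n. u (n - 1))"
      using inner_jacobi_left[OF w u dB] by (simp add: dw_def)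
    have "l2Z_inner w (\<lambda>n. u (n + 1)) + l2Z_inner w (\<lambda>n. u (n - 1))
        = l2Z_inner w (\<lambda>n. u (n + 1) + u (n - 1))"
      by (rule inner_add_right[symmetric]) (use Su w in auto)
    also have "(\<lambda>n. u (n + 1) + u (n - 1)) = (\<lambda>n. lam * u n + (-1) * du n + 0 * u n)"
    proof
      fix n
      have "u (n - 1) + d n * u n + u (n + 1) = lam * u n" using fun_cong[OF eig, of n] by (simp add: jacobi_def)
      then show "u (n + 1) + u (n - 1) = lam * u n + (-1) * du n + 0 * u n"
        by (simp add: du_def algebra_simps)
    qed
    also have "l2Z_inner w \<dots> = cnj lam * l2Z_inner w u + cnj (-1) * l2Z_inner w du + cnj 0 * l2Z_inner w u"
      by (rule inner3_right[OF u du u w])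
    finally have A: "l2Z_inner w (\<lambda>n. u (n + 1)) + l2Z_inner w (\<lambda>n. u (n - 1)) = - l2Z_inner w du"
      using wu by simp
    have "l2Z_inner w (\<lambda>n. c0 * u n + (-1) * du n + 1 * cdu n) = cnj c0 * l2Z_inner w u + cnj (-1) * l2Z_inner w du + cnj 1 * l2Z_inner w cdu"
      by (rule inner3_right[OF u du cdu w])
    then have "l2Z_inner w w = cnj c0 * l2Z_inner w u + cnj (-1) * l2Z_inner w du + cnj 1 * l2Z_inner w cdu"
      by (simp only: w_def[symmetric])
    moreover have "l2Z_inner w cdu = l2Z_inner dw u"
      unfolding l2Z_inner_def cdu_def dw_def by (simp add: mult_ac)
    ultimately have B: "l2Z_inner w w = - l2Z_inner w du + l2Z_inner dw u" using wu by simp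
    have X: "l2Z_inner w du + l2Z_inner (jacobi d w) u = l2Z_inner dw u" using JwL A by (simp add: algebra_simps)
    have Y: "l2Z_inner w du + l2Z_inner w w = l2Z_inner dw u" using B by simp
    from X Y show ?thesis by (metis add_left_cancel)
  qed
  define m2 where "m2 = (\<Sum>\<^sub>\<infinity>n. (cmod (w n))\<^sup>2)"
  have m2pos: "m2 > 0" unfolding m2_def
    by (rule infsum_pos_elem[of _ n0]) (use w wn wnz in \<open>auto simp: l2Z_iff\<close>)
  have ww: "l2Z_inner w w = of_real m2" unfolding m2_def by (rule inner_self_Re[OF w])
  define m where "m = sqrt m2"
  have mpos: "m > 0" unfolding m_def using m2pos by simp
  have mm: "m * m = m2" unfolding m_def using m2pos by simp
  define C where "C = l2Z_inner (jacobi d w) w / of_real m2"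
  have JwC: "l2Z_inner (jacobi d w) w = C * of_real m2" unfolding C_def using m2pos by simp
  have Jwl2: "jacobi d w \<in> l2Z" by (rule jacobi_l2[OF w dB])
  obtain r where r: "r > 0" and rz: "\<And>z. cmod (z - lam) < r \<Longrightarrow> (\<exists>a b. a\<^sup>2 + (cmod b)\<^sup>2 = 1 \<and>
            z = of_real (a\<^sup>2) * lam + of_real (a*m) * b + of_real ((cmod b)\<^sup>2) * C)"
    using geom[OF mpos, of lam C] by blast
  have "ball lam r \<subseteq> numrange d"
  proof
    fix z assume "z \<in> ball lam r"
    then have "cmod (z - lam) < r" by (simp add: dist_norm norm_minus_commute)
    then obtain a b where ab: "a\<^sup>2 + (cmod b)\<^sup>2 = 1"
      and z: "z = of_real (a\<^sup>2) * lam + of_real (a*m) * b + of_real ((cmod b)\<^sup>2) * C"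
      using rz by blast
    define \<alpha> where "\<alpha> = (of_real a :: complex)"
    define \<beta> where "\<beta> = b / of_real m"
    define v where "v = (\<lambda>n. \<alpha> * u n + \<beta> * w n + 0 * u n)"
    have v: "v \<in> l2Z" unfolding v_def by (intro l2_add l2_cmult u w)
    have Jv: "jacobi d v = (\<lambda>n. (\<alpha> * lam) * u n + \<beta> * jacobi d w n + 0 * u n)"
    proof
      fix n
      have "u (n - 1) + d n * u n + u (n + 1) = lam * u n" using fun_cong[OF eig, of n] by (simp add: jacobi_def)
      then have "\<alpha> * (u (n - 1) + d n * u n + u (n + 1)) = \<alpha> * (lam * u n)" by simp
      then show "jacobi d v n = (\<alpha> * lam) * u n + \<beta> * jacobi d w n + 0 * u n"
        unfolding jacobi_def v_def by (simp add: algebra_simps)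
    qed
    have uv: "l2Z_inner u v = cnj \<alpha>"
      unfolding v_def using inner3_right[OF u w u u, of \<alpha> \<beta> 0] uu uw by simp
    have wv: "l2Z_inner w v = cnj \<beta> * of_real m2"
      unfolding v_def using inner3_right[OF u w u w, of \<alpha> \<beta> 0] wu ww by simp
    have Jwv: "l2Z_inner (jacobi d w) v = cnj \<alpha> * of_real m2 + cnj \<beta> * (C * of_real m2)"
      unfolding v_def using inner3_right[OF u w u Jwl2, of \<alpha> \<beta> 0] Jw ww JwC by simp
    have Jvv: "l2Z_inner (jacobi d v) v = (\<alpha> * lam) * cnj \<alpha> + \<beta> * (cnj \<alpha> * of_real m2 + cnj \<beta> * (C * of_real m2))"
      unfolding Jv using inner3_left[OF u Jwl2 u v, of "\<alpha> * lam" \<beta> 0] uv Jwv by simp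
    have vv: "l2Z_inner v v = \<alpha> * cnj \<alpha> + \<beta> * (cnj \<beta> * of_real m2)"
    proof -
      have "v = (\<lambda>n. \<alpha> * u n + \<beta> * w n)" by (simp add: v_def)
      then show ?thesis using inner3_left[OF u w u v, of \<alpha> \<beta> 0] uv wv by simp
    qed
    have bb: "b * cnj b = of_real ((cmod b)\<^sup>2)" by (rule complex_norm_square[symmetric])
    have bb2: "b * cnj b = (of_real (cmod b))\<^sup>2" by (metis complex_norm_square of_real_power)
    have mc: "(of_real m :: complex) * of_real m = of_real m2" by (simp flip: mm)
    have mnz: "(of_real m :: complex) \<noteq> 0" using mpos by simp
    have bbm: "\<beta> * (cnj \<beta> * of_real m2) = of_real ((cmod b)\<^sup>2)"
      unfolding \<beta>_def using mnz by (simp add: bb2 mc[symmetric] field_simps)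
    have vv2: "l2Z_inner v v = 1" unfolding vv bbm \<alpha>_def
      using ab by (simp flip: of_real_mult of_real_add add: power2_eq_square)
    have nv: "l2Z_norm v = 1"
    proof -
      have "complex_of_real (\<Sum>\<^sub>\<infinity>n. (cmod (v n))\<^sup>2) = 1" using vv2 inner_self_Re[OF v] by simp
      then have "(\<Sum>\<^sub>\<infinity>n. (cmod (v n))\<^sup>2) = 1" by (metis of_real_eq_1_iff)
      then show ?thesis unfolding l2Z_norm_def by simp
    qed
    have "l2Z_inner (jacobi d v) v = z"
    proof -
      have T1: "\<beta> * cnj \<alpha> * of_real m2 = of_real (a * m) * b"
        unfolding \<beta>_def \<alpha>_def using mnz by (simp add: mc[symmetric] field_simps)
      have T2: "\<beta> * cnj \<beta> * (C * of_real m2) = of_real ((cmod b)\<^sup>2) * C"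
        using bbm by (simp add: algebra_simps)
      have T3: "\<alpha> * lam * cnj \<alpha> = of_real (a\<^sup>2) * lam"
        unfolding \<alpha>_def by (simp add: power2_eq_square)
      have "l2Z_inner (jacobi d v) v = \<alpha> * lam * cnj \<alpha> + \<beta> * cnj \<alpha> * of_real m2 + \<beta> * cnj \<beta> * (C * of_real m2)"
        unfolding Jvv by (simp add: algebra_simps)
      also have "\<dots> = z" unfolding T1 T2 T3 z by simp
      finally show ?thesis .
    qed
    then show "z \<in> numrange d" unfolding numrange_def using v nv by blast
  qed
  then show ?thesis unfolding mem_interior using r by blast
qed



lemma sum_split_lessThan: "(\<Sum>i<k+l. f i) = (\<Sum>i<k. f i) + (\<Sum>i<l. f (k + i)) " for f :: "nat \<Rightarrow> real"
  by (induction l) (simp_all add: add.assoc)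

lemma half_out:
  fixes w W :: "nat \<Rightarrow> real"
  assumes rec: "\<And>j. w j + w (j+2) = (r - W (j+1)) * w (j+1)"
    and r: "r > 2" and W0: "W \<longlonglongrightarrow> 0" and w0: "w \<longlonglongrightarrow> 0"
    and zeros: "\<And>J. \<exists>j\<ge>J. w j = 0"
  shows "\<exists>j. w j = 0 \<and> w (Suc j) = 0"
proof -
  have "(\<lambda>j. \<bar>W j\<bar>) \<longlonglongrightarrow> 0" using W0 by (simp add: tendsto_rabs_zero_iff)
  then have "\<forall>\<^sub>F j in sequentially. \<bar>W j\<bar> < r - 2"
    using r by (intro order_tendstoD(2)) auto
  then obtain J0 where J0: "\<And>j. j \<ge> J0 \<Longrightarrow> \<bar>W j\<bar> < r - 2" by (auto simp: eventually_sequentially)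
  obtain j where j: "j \<ge> J0" "w j = 0" using zeros by blast
  show ?thesis
  proof (rule ccontr)
    assume "\<not> ?thesis"
    then have c: "w (Suc j) \<noteq> 0" using j by blast
    define c where "c = w (Suc j)"
    define p where "p = (\<lambda>k. c * w (j + k))"
    have c2: "c * c > 0" using c unfolding c_def by (simp add: zero_less_mult_iff, linarith)
    have mono: "p k \<le> p (Suc k) \<and> c * c \<le> p (Suc k)" for k
    proof (induction k)
      case 0
      then show ?case using j c2 by (simp add: p_def c_def)
    next
      case (Suc k)
      have rk: "w (j+k) + w (j+k+2) = (r - W (j+k+1)) * w (j+k+1)" using rec[of "j+k"] .
      have pk: "p (Suc (Suc k)) = (r - W (j+k+1)) * p (Suc k) - p k"
      proof -
        have "c * (w (j+k) + w (j+k+2)) = c * ((r - W (j+k+1)) * w (j+k+1))" using rk by simp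
        then show ?thesis unfolding p_def by (simp add: algebra_simps eval_nat_numeral)
      qed
      have "\<bar>W (j+k+1)\<bar> < r - 2" using J0 j by simp
      then have ge2: "r - W (j+k+1) \<ge> 2" by linarith
      have "0 \<le> p (Suc k)" using Suc c2 by linarith
      then have "2 * p (Suc k) \<le> (r - W (j+k+1)) * p (Suc k)" using ge2 by (intro mult_right_mono) auto
      then show ?case using Suc pk by linarith
    qed
    have "p \<longlonglongrightarrow> 0" unfolding p_def
      using tendsto_mult_right_zero[OF LIMSEQ_ignore_initial_segment[OF w0, of j], of c]
      by (simp add: add.commute)
    then have "\<forall>\<^sub>F k in sequentially. p (Suc k) < c * c"
      using c2 by (intro order_tendstoD(2)) (auto intro: LIMSEQ_Suc)
    then obtain k where "p (Suc k) < c * c" by (auto simp: eventually_sequentially)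
    then show False using mono[of k] by linarith
  qed
qed

lemma half_two:
  fixes w W :: "nat \<Rightarrow> real"
  assumes rec: "\<And>j. w j + w (j+2) = (2 - W (j+1)) * w (j+1)"
    and w0: "w \<longlonglongrightarrow> 0" and sw: "summable (\<lambda>j. real j * \<bar>W j\<bar>)"
  shows "\<exists>j. w j = 0 \<and> w (Suc j) = 0"
proof -
  define G where "G = (\<lambda>j. real j * \<bar>W j\<bar>)"
  define D where "D = (\<lambda>j. w (Suc j) - w j)"
  have G0: "\<And>j. G j \<ge> 0" unfolding G_def by simp
  have sG: "summable G" using sw unfolding G_def .
  have Dstep: "D (Suc j) = D j - W (Suc j) * w (Suc j)" for j
  proof -
    have h: "w j + w (Suc (Suc j)) = 2 * w (Suc j) - W (Suc j) * w (Suc j)"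
      using rec[of j] by (simp add: algebra_simps eval_nat_numeral)
    show ?thesis using h unfolding D_def by linarith
  qed
  have I2: "D L = D (L + k) + (\<Sum>i<k. W (L+1+i) * w (L+1+i))" for L k
  proof (induction k)
    case 0 then show ?case by simp
  next
    case (Suc k)
    have "D (L + Suc k) = D (L + k) - W (L + 1 + k) * w (L + 1 + k)"
      using Dstep[of "L + k"] by simp
    then show ?case using Suc by simp
  qed
  have I1: "w p = w (p+k) - real k * D (p+k) - (\<Sum>i<k. real (i+1) * W (p+1+i) * w (p+1+i))" for p k
  proof (induction k)
    case 0 then show ?case by simp
  next
    case (Suc k)
    define X where "X = W (p+1+k) * w (p+1+k)"
    have a: "w (p + Suc k) = w (p + k) + D (p + k)" unfolding D_def by simp
    have b: "D (p + Suc k) = D (p + k) - X" unfolding X_def using Dstep[of "p + k"] by simp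
    have s: "(\<Sum>i<Suc k. real (i+1) * W (p+1+i) * w (p+1+i)) = (\<Sum>i<k. real (i+1) * W (p+1+i) * w (p+1+i)) + real (k+1) * X"
      unfolding X_def by (simp add: mult.assoc)
    have m: "real (Suc k) * D (p + Suc k) = real k * D (p+k) + D (p+k) - real (k+1) * X"
      unfolding b by (simp add: algebra_simps)
    show ?case using Suc a s m by linarith
  qed
  obtain N where N: "\<And>n. n \<ge> N \<Longrightarrow> norm (\<Sum>i. G (i + n)) < 1/2"
    using suminf_exist_split[OF _ sG, of "1/2"] by auto
  have tailb: "(\<Sum>i<n. G (p+1+i)) \<le> 1/2" if p: "p \<ge> N" for p n
  proof -
    have "(\<Sum>i<n. G (i + (p+1))) \<le> (\<Sum>i. G (i + (p+1)))"
      by (rule sum_le_suminf) (use summable_ignore_initial_segment[OF sG, of "p+1"] G0 in auto)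
    also have "\<dots> \<le> norm (\<Sum>i. G (i + (p+1)))" by simp
    also have "\<dots> < 1/2" using N[of "p+1"] p by linarith
    finally show ?thesis by (simp add: add.commute)
  qed
  have D0: "D \<longlonglongrightarrow> 0" unfolding D_def using tendsto_diff[OF LIMSEQ_Suc[OF w0] w0] by simp
  obtain B where B: "\<And>j. \<bar>w j\<bar> \<le> B"
  proof -
    have "Bseq w" using convergent_imp_Bseq[of w] w0 by (auto simp: convergent_def)
    then show ?thesis using that by (metis BseqE real_norm_def)
  qed
  have step: "\<bar>w p\<bar> \<le> M / 2" if hM: "\<And>m. m \<ge> N \<Longrightarrow> \<bar>w m\<bar> \<le> M" and p: "p \<ge> N" for M p
  proof (rule field_le_epsilon)
    fix e :: real assume e: "e > 0"
    have "\<forall>\<^sub>F j in sequentially. \<bar>w j\<bar> < e/2"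
      by (rule order_tendstoD(2)[OF tendsto_rabs_zero_iff[THEN iffD2, OF w0]]) (use e in simp)
    then obtain J1 where J1: "\<And>j. j \<ge> J1 \<Longrightarrow> \<bar>w j\<bar> < e/2" by (auto simp: eventually_sequentially)
    define k where "k = J1"
    have wk: "\<bar>w (p+k)\<bar> < e/2" using J1 unfolding k_def by simp
    have "(\<lambda>j. real k * D j) \<longlonglongrightarrow> 0" using tendsto_mult_right_zero[OF D0] by simp
    then have "\<forall>\<^sub>F j in sequentially. \<bar>real k * D j\<bar> < e/2"
      by (intro order_tendstoD(2)[OF tendsto_rabs_zero_iff[THEN iffD2]]) (use e in simp_all)
    then obtain J2 where J2: "\<And>j. j \<ge> J2 \<Longrightarrow> \<bar>real k * D j\<bar> < e/2" by (auto simp: eventually_sequentially)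
    define l where "l = J2"
    have Dl: "\<bar>real k * D (p+k+l)\<bar> < e/2" using J2 unfolding l_def by simp
    define S1 where "S1 = (\<Sum>i<k. real (i+1) * W (p+1+i) * w (p+1+i))"
    define S2 where "S2 = (\<Sum>i<l. W (p+k+1+i) * w (p+k+1+i))"
    have wp: "w p = w (p+k) - real k * D (p+k+l) - real k * S2 - S1"
      using I1[of p k] I2[of "p+k" l] unfolding S1_def S2_def by (simp add: algebra_simps)
    have S1b: "\<bar>S1\<bar> \<le> M * (\<Sum>i<k. G (p+1+i))"
    proof -
      have "\<bar>S1\<bar> \<le> (\<Sum>i<k. \<bar>real (i+1) * W (p+1+i) * w (p+1+i)\<bar>)" unfolding S1_def by (rule sum_abs)
      also have "\<dots> \<le> (\<Sum>i<k. M * G (p+1+i))"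
      proof (rule sum_mono)
        fix i assume "i \<in> {..<k}"
        have "\<bar>w (p+1+i)\<bar> \<le> M" using hM p by simp
        moreover have "real (i+1) * \<bar>W (p+1+i)\<bar> \<le> G (p+1+i)"
          unfolding G_def by (intro mult_right_mono) auto
        ultimately have X: "(real (i+1) * \<bar>W (p+1+i)\<bar>) * \<bar>w (p+1+i)\<bar> \<le> G (p+1+i) * M"
          by (intro mult_mono) (auto simp: G0)
        have eq: "\<bar>real (i+1) * W (p+1+i) * w (p+1+i)\<bar> = (real (i+1) * \<bar>W (p+1+i)\<bar>) * \<bar>w (p+1+i)\<bar>"
          by (simp only: abs_mult abs_of_nat)
        show "\<bar>real (i+1) * W (p+1+i) * w (p+1+i)\<bar> \<le> M * G (p+1+i)"
          unfolding eq using X by (simp only: mult.commute)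
      qed
      finally show ?thesis by (simp add: sum_distrib_left)
    qed
    have S2b: "\<bar>real k * S2\<bar> \<le> M * (\<Sum>i<l. G (p+1+(k+i)))"
    proof -
      have "\<bar>real k * S2\<bar> = \<bar>\<Sum>i<l. real k * (W (p+k+1+i) * w (p+k+1+i))\<bar>" unfolding S2_def by (simp add: sum_distrib_left)
      also have "\<dots> \<le> (\<Sum>i<l. \<bar>real k * (W (p+k+1+i) * w (p+k+1+i))\<bar>)" by (rule sum_abs)
      also have "\<dots> \<le> (\<Sum>i<l. M * G (p+1+(k+i)))"
      proof (rule sum_mono)
        fix i assume "i \<in> {..<l}"
        have "\<bar>w (p+k+1+i)\<bar> \<le> M" using hM p by simp
        moreover have "real k * \<bar>W (p+k+1+i)\<bar> \<le> G (p+1+(k+i))"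
        proof -
          have idx: "p + k + 1 + i = p + 1 + (k + i)" by simp
          show ?thesis unfolding G_def idx by (intro mult_right_mono) auto
        qed
        ultimately have X: "(real k * \<bar>W (p+k+1+i)\<bar>) * \<bar>w (p+k+1+i)\<bar> \<le> G (p+1+(k+i)) * M"
          by (intro mult_mono) (auto simp: G0)
        have eq: "\<bar>real k * (W (p+k+1+i) * w (p+k+1+i))\<bar> = (real k * \<bar>W (p+k+1+i)\<bar>) * \<bar>w (p+k+1+i)\<bar>"
          by (simp only: abs_mult abs_of_nat mult.assoc)
        show "\<bar>real k * (W (p+k+1+i) * w (p+k+1+i))\<bar> \<le> M * G (p+1+(k+i))"
          unfolding eq using X by (simp only: mult.commute)
      qed
      finally show ?thesis by (simp add: sum_distrib_left)
    qed
    have M0: "M \<ge> 0" using hM[of N] by simp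
    have "(\<Sum>i<k. G (p+1+i)) + (\<Sum>i<l. G (p+1+(k+i))) = (\<Sum>i<k+l. G (p+1+i))"
      by (rule sum_split_lessThan[symmetric])
    also have "\<dots> \<le> 1/2" by (rule tailb[OF p])
    finally have Ss: "(\<Sum>i<k. G (p+1+i)) + (\<Sum>i<l. G (p+1+(k+i))) \<le> 1/2" .
    have "M * (\<Sum>i<k. G (p+1+i)) + M * (\<Sum>i<l. G (p+1+(k+i))) \<le> M * (1/2)"
      using mult_left_mono[OF Ss M0] by (simp only: distrib_left)
    then show "\<bar>w p\<bar> \<le> M / 2 + e"
      using wp wk Dl S1b S2b by linarith
  qed
  have iter: "\<forall>p\<ge>N. \<bar>w p\<bar> \<le> B / 2^n" for n
  proof (induction n)
    case 0 then show ?case using B by simp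
  next
    case (Suc n)
    have "\<bar>w p\<bar> \<le> (B / 2^n) / 2" if "p \<ge> N" for p
      using step[of "B / 2^n" p] Suc that by blast
    then show ?case by (simp add: mult.commute)
  qed
  have zero: "w p = 0" if "p \<ge> N" for p
  proof -
    have "\<bar>w p\<bar> \<le> 0"
      by (rule LIMSEQ_le_const[OF LIMSEQ_divide_realpow_zero[of 2 B]]) (use iter that in auto)
    then show ?thesis by simp
  qed
  show ?thesis using zero[of N] zero[of "Suc N"] by auto
qed

lemma exp_le_one_minus: "0 \<le> x \<Longrightarrow> x \<le> 1/2 \<Longrightarrow> exp (-2*x) \<le> 1 - (x::real)"
proof -
  assume x: "0 \<le> x" "x \<le> 1/2"
  have e: "1 + 2*x \<le> exp (2*x)" using exp_ge_add_one_self[of "2*x"] by simp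
  have "x * x \<le> x * (1/2)" using x by (intro mult_left_mono) auto
  then have p: "1 \<le> (1 - x) * (1 + 2*x)" by (simp add: algebra_simps)
  have "exp (-2*x) = 1 / exp (2*x)" by (simp add: exp_minus field_simps)
  also have "\<dots> \<le> 1 / (1 + 2*x)" using e x by (intro divide_left_mono) auto
  also have "\<dots> \<le> 1 - x" using p x by (simp add: divide_le_eq)
  finally show ?thesis .
qed

lemma rab_bound: "r * a * b \<le> \<bar>r\<bar> / 2 * (a\<^sup>2 + b\<^sup>2)" for r a b :: real
proof -
  have "2 * \<bar>a\<bar> * \<bar>b\<bar> \<le> \<bar>a\<bar>\<^sup>2 + \<bar>b\<bar>\<^sup>2" by (rule sum_squares_bound)
  then have h: "\<bar>a * b\<bar> \<le> (a\<^sup>2 + b\<^sup>2) / 2" by (simp add: abs_mult)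
  have "r * a * b \<le> \<bar>r * a * b\<bar>" by simp
  also have "\<dots> = \<bar>r\<bar> * \<bar>a * b\<bar>" by (simp add: abs_mult)
  also have "\<dots> \<le> \<bar>r\<bar> * ((a\<^sup>2 + b\<^sup>2) / 2)" using h by (intro mult_left_mono) auto
  finally show ?thesis by simp
qed

lemma half_in:
  fixes w W :: "nat \<Rightarrow> real"
  assumes rec: "\<And>j. w j + w (j+2) = (r - W (j+1)) * w (j+1)"
    and r: "\<bar>r\<bar> < 2" and w0: "w \<longlonglongrightarrow> 0" and sW: "summable (\<lambda>j. \<bar>W j\<bar>)"
  shows "\<exists>j. w j = 0 \<and> w (Suc j) = 0"
proof -
  define c where "c = 1 - \<bar>r\<bar>/2"
  have c: "c > 0" unfolding c_def using r by simp
  define E where "E = (\<lambda>j. (w j)\<^sup>2 + (w (Suc j))\<^sup>2 - r * w j * w (Suc j))"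
  have Elow: "c * ((w j)\<^sup>2 + (w (Suc j))\<^sup>2) \<le> E j" for j
    using rab_bound[of r "w j" "w (Suc j)"] unfolding E_def c_def by (simp add: algebra_simps)
  have E0: "E j \<ge> 0" for j
    using Elow[of j] c by (smt (verit) mult_nonneg_nonneg zero_le_power2)
  define K where "K = 4 / c"
  have K: "K > 0" unfolding K_def using c by simp
  have Estep: "E (Suc j) \<ge> (1 - K * \<bar>W (Suc j)\<bar>) * E j" if V1: "\<bar>W (Suc j)\<bar> \<le> 1" for j
  proof -
    define V where "V = W (Suc j)"
    define y0 where "y0 = w j"
    define y1 where "y1 = w (Suc j)"
    have y2: "w (Suc (Suc j)) = (r - V) * y1 - y0"
      using rec[of j] unfolding V_def y0_def y1_def by (simp add: eval_nat_numeral algebra_simps)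
    have ident: "E (Suc j) - E j = V * (y1 * (2*y0 - r*y1 + V*y1))"
      unfolding E_def y2 by (simp add: y0_def[symmetric] y1_def[symmetric] algebra_simps power2_eq_square)
    have f1: "2 * \<bar>y0 * y1\<bar> \<le> y0\<^sup>2 + y1\<^sup>2"
      using sum_squares_bound[of "\<bar>y0\<bar>" "\<bar>y1\<bar>"] by (simp add: abs_mult)
    have Vr: "\<bar>V - r\<bar> \<le> 3" using V1 r unfolding V_def by linarith
    have f2: "\<bar>V - r\<bar> * y1\<^sup>2 \<le> 3 * y1\<^sup>2" using Vr by (intro mult_right_mono) auto
    have eq: "y1 * (2*y0 - r*y1 + V*y1) = 2 * (y0 * y1) + (V - r) * y1\<^sup>2"
      by (simp add: algebra_simps power2_eq_square)
    have f3: "\<bar>2 * (y0 * y1) + (V - r) * y1\<^sup>2\<bar> \<le> 2 * \<bar>y0 * y1\<bar> + \<bar>V - r\<bar> * y1\<^sup>2"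
      using abs_triangle_ineq[of "2 * (y0 * y1)" "(V - r) * y1\<^sup>2"] by (simp add: abs_mult)
    have q: "\<bar>y1 * (2*y0 - r*y1 + V*y1)\<bar> \<le> 4 * (y0\<^sup>2 + y1\<^sup>2)"
      unfolding eq using f1 f2 f3 by (smt (verit) zero_le_power2)
    have "c * (y0\<^sup>2 + y1\<^sup>2) \<le> E j" using Elow[of j] unfolding y0_def y1_def .
    then have "4 * (y0\<^sup>2 + y1\<^sup>2) \<le> K * E j" unfolding K_def using c by (simp add: field_simps)
    then have q2: "\<bar>y1 * (2*y0 - r*y1 + V*y1)\<bar> \<le> K * E j" using q by linarith
    have "\<bar>E (Suc j) - E j\<bar> = \<bar>V\<bar> * \<bar>y1 * (2*y0 - r*y1 + V*y1)\<bar>" unfolding ident by (simp add: abs_mult)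
    also have "\<dots> \<le> \<bar>V\<bar> * (K * E j)" using q2 by (intro mult_left_mono) auto
    finally have "\<bar>E (Suc j) - E j\<bar> \<le> \<bar>V\<bar> * (K * E j)" .
    then show ?thesis unfolding V_def by (simp add: algebra_simps abs_le_iff)
  qed
  have W0: "(\<lambda>j. \<bar>W j\<bar>) \<longlonglongrightarrow> 0" using summable_LIMSEQ_zero[OF sW] .
  have "\<forall>\<^sub>F j in sequentially. \<bar>W j\<bar> < min 1 (1 / (2*K))"
    by (rule order_tendstoD(2)[OF W0]) (use K in simp)
  then obtain N where N: "\<And>j. j \<ge> N \<Longrightarrow> \<bar>W j\<bar> < min 1 (1 / (2*K))" by (auto simp: eventually_sequentially)
  define S where "S = (\<Sum>i. \<bar>W i\<bar>)"
  have partial: "(\<Sum>i<k. \<bar>W (N+1+i)\<bar>) \<le> S" for k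
  proof -
    have "(\<Sum>i<k. \<bar>W (i + (N+1))\<bar>) \<le> (\<Sum>i. \<bar>W (i + (N+1))\<bar>)"
      by (rule sum_le_suminf) (use summable_ignore_initial_segment[OF sW, of "N+1"] in auto)
    also have "\<dots> \<le> S" unfolding S_def
      using suminf_split_initial_segment[OF sW, of "N+1"] sum_nonneg[of "{..<N+1}" "\<lambda>i. \<bar>W i\<bar>"] by simp
    finally show ?thesis by (simp add: add.commute)
  qed
  have prodb: "E (N + k) \<ge> E N * exp (-2 * K * (\<Sum>i<k. \<bar>W (N+1+i)\<bar>))" for k
  proof (induction k)
    case 0 then show ?case by simp
  next
    case (Suc k)
    define x where "x = K * \<bar>W (Suc (N + k))\<bar>"
    have Nk: "\<bar>W (Suc (N+k))\<bar> < min 1 (1 / (2*K))" using N by simp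
    then have x1: "x \<le> 1/2" "0 \<le> x" unfolding x_def using K by (auto simp: field_simps)
    have st: "E (Suc (N+k)) \<ge> (1 - x) * E (N+k)" unfolding x_def using Estep[of "N+k"] Nk by simp
    have "E N * exp (-2 * K * (\<Sum>i<Suc k. \<bar>W (N+1+i)\<bar>))
        = exp (-2*x) * (E N * exp (-2 * K * (\<Sum>i<k. \<bar>W (N+1+i)\<bar>)))"
      unfolding x_def by (simp add: algebra_simps exp_add[symmetric])
    also have "\<dots> \<le> exp (-2*x) * E (N+k)"
      using Suc by (intro mult_left_mono) auto
    also have "\<dots> \<le> (1 - x) * E (N+k)"
      using exp_le_one_minus[OF x1(2,1)] E0 by (intro mult_right_mono) auto
    also have "\<dots> \<le> E (N + Suc k)" using st by simp
    finally show ?case .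
  qed
  have Elim: "E \<longlonglongrightarrow> 0" unfolding E_def
    using w0 LIMSEQ_Suc[OF w0] by (auto intro!: tendsto_eq_intros)
  have "E N \<le> 0"
  proof (rule ccontr)
    assume "\<not> E N \<le> 0"
    then have EN: "E N > 0" by simp
    define \<delta> where "\<delta> = E N * exp (-2 * K * S)"
    have dpos: "\<delta> > 0" unfolding \<delta>_def using EN by simp
    have "E (N + k) \<ge> \<delta>" for k
    proof -
      have "exp (-2 * K * S) \<le> exp (-2 * K * (\<Sum>i<k. \<bar>W (N+1+i)\<bar>))"
        using partial[of k] K by simp
      then show ?thesis using prodb[of k] EN unfolding \<delta>_def by (smt (verit) mult_left_mono)
    qed
    moreover have "\<forall>\<^sub>F j in sequentially. E j < \<delta>" by (rule order_tendstoD(2)[OF Elim dpos])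
    then obtain J where "\<And>j. j \<ge> J \<Longrightarrow> E j < \<delta>" by (auto simp: eventually_sequentially)
    ultimately show False by (metis le_add2 not_le)
  qed
  then have "c * ((w N)\<^sup>2 + (w (Suc N))\<^sup>2) \<le> 0" using Elow[of N] by linarith
  then have "(w N)\<^sup>2 + (w (Suc N))\<^sup>2 \<le> 0" using c by (simp add: mult_le_0_iff)
  then show ?thesis by (intro exI[of _ N]) (smt (verit) zero_le_power2 power_eq_0_iff zero_less_power2)
qed

lemma half_pos:
  fixes w W :: "nat \<Rightarrow> real"
  assumes rec: "\<And>j. w j + w (j+2) = (r - W (j+1)) * w (j+1)"
    and r: "r \<ge> 2" and w0: "w \<longlonglongrightarrow> 0" and sw: "summable (\<lambda>j. real j * \<bar>W j\<bar>)"
    and W0: "W \<longlonglongrightarrow> 0" and zeros: "\<And>J. \<exists>j\<ge>J. w j = 0"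
  shows "\<exists>j. w j = 0 \<and> w (Suc j) = 0"
proof (cases "r = 2")
  case True
  then show ?thesis using half_two[of w W] rec w0 sw by blast
next
  case False
  then have "r > 2" using r by simp
  then show ?thesis using half_out[of w r W] rec W0 w0 zeros by blast
qed

lemma half:
  fixes w W :: "nat \<Rightarrow> real"
  assumes rec: "\<And>j. w j + w (j+2) = (r - W (j+1)) * w (j+1)"
    and w0: "w \<longlonglongrightarrow> 0" and sw: "summable (\<lambda>j. real j * \<bar>W j\<bar>)"
    and zeros: "\<And>J. \<exists>j\<ge>J. w j = 0"
  shows "\<exists>j. w j = 0 \<and> w (Suc j) = 0"
proof -
  have sW: "summable (\<lambda>j. \<bar>W j\<bar>)"
  proof (rule summable_comparison_test'[OF sw, of 1])
    fix n :: nat assume "1 \<le> n"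
    then show "norm \<bar>W n\<bar> \<le> real n * \<bar>W n\<bar>"
      using mult_right_mono[of 1 "real n" "\<bar>W n\<bar>"] by simp
  qed
  have W0: "W \<longlonglongrightarrow> 0" using summable_LIMSEQ_zero[OF sW] by (simp add: tendsto_rabs_zero_iff)
  consider "\<bar>r\<bar> < 2" | "r \<ge> 2" | "r \<le> -2" by linarith
  then show ?thesis
  proof cases
    case 1 then show ?thesis using half_in[of w r W] rec w0 sW by blast
  next
    case 2 then show ?thesis using half_pos[of w r W] rec w0 sw W0 zeros by blast
  next
    case 3
    define w' where "w' = (\<lambda>j. (-1::real)^j * w j)"
    define W' where "W' = (\<lambda>j. - W j)"
    have rec': "w' j + w' (j+2) = (-r - W' (j+1)) * w' (j+1)" for j
    proof -
      have "(-1::real)^j * (w j + w (j+2)) = (-1)^j * ((r - W (j+1)) * w (j+1))" using rec[of j] by simp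
      then show ?thesis unfolding w'_def W'_def by (simp add: power_add algebra_simps)
    qed
    have abs': "(\<lambda>j. \<bar>w' j\<bar>) = (\<lambda>j. \<bar>w j\<bar>)" unfolding w'_def by (simp add: abs_mult)
    have w0': "w' \<longlonglongrightarrow> 0"
      using w0 abs' by (metis tendsto_rabs_zero_iff)
    have sw': "summable (\<lambda>j. real j * \<bar>W' j\<bar>)" using sw unfolding W'_def by simp
    have W0': "W' \<longlonglongrightarrow> 0" using tendsto_minus[OF W0] unfolding W'_def by simp
    have z': "\<exists>j\<ge>J. w' j = 0" for J using zeros[of J] unfolding w'_def by auto
    obtain j where "w' j = 0" "w' (Suc j) = 0"
      using half_pos[of w' "-r" W', OF rec' _ w0' sw' W0' z'] 3 by auto
    then show ?thesis unfolding w'_def by auto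
  qed
qed



lemma zero_prop:
  fixes y c :: "int \<Rightarrow> 'a::comm_ring_1"
  assumes rec: "\<And>n. y (n - 1) + y (n + 1) = c n * y n"
    and z: "y m = 0" "y (m + 1) = 0"
  shows "y n = 0"
proof -
  have fw: "y (m + int k) = 0 \<and> y (m + int k + 1) = 0" for k
  proof (induction k)
    case 0 then show ?case using z by simp
  next
    case (Suc k)
    have "y (m + int k) + y (m + int k + 2) = c (m + int k + 1) * y (m + int k + 1)"
      using rec[of "m + int k + 1"] by (simp add: add.assoc)
    then have "y (m + int k + 2) = 0" using Suc by simp
    then show ?case using Suc by (simp add: ac_simps)
  qed
  have bw: "y (m - int k) = 0 \<and> y (m - int k + 1) = 0" for k
  proof (induction k)
    case 0 then show ?case using z by simp
  next
    case (Suc k)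
    have "y (m - int k - 1) + y (m - int k + 1) = c (m - int k) * y (m - int k)"
      using rec[of "m - int k"] by simp
    then have "y (m - int k - 1) = 0" using Suc by simp
    then show ?case using Suc by (simp add: algebra_simps)
  qed
  show ?thesis
  proof (cases "n \<ge> m")
    case True
    then have "n = m + int (nat (n - m))" by simp
    then show ?thesis using fw[of "nat (n - m)"] by metis
  next
    case False
    then have "n = m - int (nat (m - n))" by simp
    then show ?thesis using bw[of "nat (m - n)"] by metis
  qed
qed

lemma sq_tendsto_zero:
  fixes f :: "nat \<Rightarrow> real"
  assumes "(\<lambda>j. (f j)\<^sup>2) summable_on UNIV"
  shows "f \<longlonglongrightarrow> 0"
proof -
  have "summable (\<lambda>j. (f j)\<^sup>2)" using assms summable_on_UNIV_nonneg_real_iff by auto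
  then have "(\<lambda>j. (f j)\<^sup>2) \<longlonglongrightarrow> 0" by (rule summable_LIMSEQ_zero)
  then have "(\<lambda>j. sqrt ((f j)\<^sup>2)) \<longlonglongrightarrow> sqrt 0" by (rule tendsto_real_sqrt)
  then show ?thesis by (simp add: tendsto_rabs_zero_iff)
qed

lemma summable_on_comp_inj:
  fixes g :: "int \<Rightarrow> real"
  assumes "g summable_on UNIV" "inj h"
  shows "(\<lambda>j::nat. g (h j)) summable_on UNIV"
proof -
  have "g summable_on (h ` UNIV)" by (rule summable_on_subset_banach[OF assms(1)]) auto
  then show ?thesis using summable_on_reindex[OF assms(2), of g] unfolding o_def by blast
qed

lemma realprop:
  fixes y V :: "int \<Rightarrow> real"
  assumes rec: "\<And>n. y (n - 1) + y (n + 1) = (r - V n) * y n"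
    and l2: "(\<lambda>n. (y n)\<^sup>2) summable_on UNIV"
    and sV: "(\<lambda>k. \<bar>real_of_int k\<bar> * \<bar>V k\<bar>) summable_on UNIV"
    and inf: "infinite {n. y n = 0}"
  shows "y n = 0"
proof -
  have injp: "inj (\<lambda>j::nat. int j)" by (simp add: inj_on_def)
  have injm: "inj (\<lambda>j::nat. - int j)" by (simp add: inj_on_def)
  have up0: "(\<lambda>j. y (int j)) \<longlonglongrightarrow> 0"
    by (rule sq_tendsto_zero, rule summable_on_comp_inj[OF l2 injp])
  have dn0: "(\<lambda>j. y (- int j)) \<longlonglongrightarrow> 0"
    by (rule sq_tendsto_zero, rule summable_on_comp_inj[OF l2 injm])
  have swp: "summable (\<lambda>j. real j * \<bar>V (int j)\<bar>)"
  proof -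
    have "(\<lambda>j::nat. \<bar>real_of_int (int j)\<bar> * \<bar>V (int j)\<bar>) summable_on UNIV"
      by (rule summable_on_comp_inj[OF sV injp])
    then show ?thesis by (subst summable_on_UNIV_nonneg_real_iff[symmetric]) auto
  qed
  have swm: "summable (\<lambda>j. real j * \<bar>V (- int j)\<bar>)"
  proof -
    have "(\<lambda>j::nat. \<bar>real_of_int (- int j)\<bar> * \<bar>V (- int j)\<bar>) summable_on UNIV"
      by (rule summable_on_comp_inj[OF sV injm])
    then show ?thesis by (subst summable_on_UNIV_nonneg_real_iff[symmetric]) auto
  qed
  have rec': "\<And>n. y (n - 1) + y (n + 1) = (r - V n) * y n" by (rule rec)
  have "(\<forall>J. \<exists>n. n \<ge> J \<and> y n = 0) \<or> (\<forall>J. \<exists>n. n \<le> J \<and> y n = 0)"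
  proof (rule ccontr)
    assume "\<not> ?thesis"
    then obtain J1 J2 where J1: "\<And>n. n \<ge> J1 \<Longrightarrow> y n \<noteq> 0" and J2: "\<And>n. n \<le> J2 \<Longrightarrow> y n \<noteq> 0" by auto
    have "{n. y n = 0} \<subseteq> {J2..J1}"
    proof
      fix n assume "n \<in> {n. y n = 0}"
      then have "\<not> n \<ge> J1" "\<not> n \<le> J2" using J1 J2 by auto
      then show "n \<in> {J2..J1}" by simp
    qed
    then show False using inf finite_subset by blast
  qed
  then obtain m where m: "y m = 0" "y (m + 1) = 0"
  proof
    assume up: "\<forall>J. \<exists>n. n \<ge> J \<and> y n = 0"
    define w where "w = (\<lambda>j::nat. y (int j))"
    define W where "W = (\<lambda>j::nat. V (int j))"
    have recw: "w j + w (j+2) = (r - W (j+1)) * w (j+1)" for j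
      using rec[of "int j + 1"] unfolding w_def W_def by (simp add: add.assoc add.commute)
    have zw: "\<exists>j\<ge>J. w j = 0" for J
    proof -
      obtain n where "n \<ge> int J" "y n = 0" using up by blast
      then show ?thesis unfolding w_def by (intro exI[of _ "nat n"]) auto
    qed
    obtain j where "w j = 0" "w (Suc j) = 0"
    proof -
      have s: "summable (\<lambda>j. real j * \<bar>W j\<bar>)" using swp unfolding W_def .
      have t: "w \<longlonglongrightarrow> 0" using up0 unfolding w_def .
      show ?thesis using half[of w r W, OF recw t s zw] that by blast
    qed
    then show ?thesis using that[of "int j"] unfolding w_def by (simp add: add.commute)
  next
    assume dn: "\<forall>J. \<exists>n. n \<le> J \<and> y n = 0"
    define w where "w = (\<lambda>j::nat. y (- int j))"
    define W where "W = (\<lambda>j::nat. V (- int j))"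
    have recw: "w j + w (j+2) = (r - W (j+1)) * w (j+1)" for j
    proof -
      have a: "- int (j+1) - 1 = - int (j+2)" "- int (j+1) + 1 = - int j" by simp_all
      have "y (- int (j+2)) + y (- int j) = (r - V (- int (j+1))) * y (- int (j+1))"
        using rec[of "- int (j+1)"] by (simp only: a)
      then show ?thesis unfolding w_def W_def by (metis add.commute)
    qed
    have zw: "\<exists>j\<ge>J. w j = 0" for J
    proof -
      obtain n where "n \<le> - int J" "y n = 0" using dn by blast
      then show ?thesis unfolding w_def by (intro exI[of _ "nat (- n)"]) auto
    qed
    obtain j where "w j = 0" "w (Suc j) = 0"
    proof -
      have s: "summable (\<lambda>j. real j * \<bar>W j\<bar>)" using swm unfolding W_def .
      have t: "w \<longlonglongrightarrow> 0" using dn0 unfolding w_def .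
      show ?thesis using half[of w r W, OF recw t s zw] that by blast
    qed
    then have A: "y (- int j) = 0" "y (- int (Suc j)) = 0" unfolding w_def by simp_all
    have e: "- int (Suc j) = - int j - 1" "- int j - 1 + 1 = - int j" by simp_all
    show ?thesis using that[of "- int j - 1"] A e by metis
  qed
  show ?thesis by (rule zero_prop[of y "\<lambda>n. r - V n", OF rec m])
qed



lemma finite_int_bound: "finite (F::int set) \<Longrightarrow> \<exists>m. \<forall>n\<in>F. n < m"
proof -
  assume f: "finite F"
  have "\<forall>n\<in>F. n < Max (insert 0 F) + 1" using f by (auto intro: Max_ge le_less_trans)
  then show ?thesis by blast
qed

lemma realprop_apply:
  fixes y :: "int \<Rightarrow> real" and v :: "int \<Rightarrow> complex"
  assumes rec: "\<And>n. y (n - 1) + y (n + 1) = (r - V n) * y n"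
    and yv: "\<And>n. \<bar>y n\<bar> \<le> cmod (v n)" and v: "v \<in> l2Z"
    and sV: "(\<lambda>k. \<bar>real_of_int k\<bar> * \<bar>V k\<bar>) summable_on UNIV"
    and inf: "infinite Z" and Z: "\<And>n. n \<in> Z \<Longrightarrow> v n = 0"
  shows "y n = 0"
proof (rule realprop[OF rec _ sV])
  show "(\<lambda>n. (y n)\<^sup>2) summable_on UNIV"
  proof (rule summable_on_comparison_test[of "\<lambda>n. (cmod (v n))\<^sup>2"])
    show "(\<lambda>n. (cmod (v n))\<^sup>2) summable_on UNIV" using v by (simp add: l2Z_iff)
    fix n
    have "\<bar>y n\<bar>\<^sup>2 \<le> (cmod (v n))\<^sup>2" using yv[of n] by (intro power_mono) auto
    then show "(y n)\<^sup>2 \<le> (cmod (v n))\<^sup>2" by simp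
  qed auto
  have "Z \<subseteq> {n. y n = 0}"
  proof
    fix n assume "n \<in> Z"
    then have "v n = 0" by (rule Z)
    then show "n \<in> {n. y n = 0}" using yv[of n] by simp
  qed
  then show "infinite {n. y n = 0}" using inf finite_subset by blast
qed

theorem mainTheorem12:
  fixes d :: "int \<Rightarrow> complex"
  assumes "(d \<longlongrightarrow> 0) cofinite"
    and "\<forall>n. Im (d n) = 0 \<or> Im (d (n + 1)) = 0"
    and "infinite {n. Im (d n) \<noteq> 0}"
    and "(\<lambda>k. \<bar>real_of_int k\<bar> * \<bar>Re (d k)\<bar>) summable_on UNIV"
  shows "\<not> (\<exists>mu. boundary_eigenvalue d mu)"
proof
  assume "\<exists>mu. boundary_eigenvalue d mu"
  then obtain mu u where u: "u \<in> l2Z" "u \<noteq> (\<lambda>_. 0)" and eig: "jacobi d u = (\<lambda>n. mu * u n)"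
    and fr: "mu \<in> frontier (numrange d)"
    unfolding boundary_eigenvalue_def is_eigenvalue_def by blast
  have nint: "mu \<notin> interior (numrange d)" using fr by (simp add: frontier_def)
  have dnorm: "((\<lambda>n. cmod (d n)) \<longlongrightarrow> 0) cofinite" using tendsto_norm_zero[OF assms(1)] .
  obtain B where dB: "\<And>n. cmod (d n) \<le> B"
  proof -
    have "eventually (\<lambda>n. cmod (d n) < 1) cofinite" by (rule order_tendstoD(2)[OF dnorm]) simp
    then have fin: "finite {n. \<not> cmod (d n) < 1}" by (simp add: eventually_cofinite)
    define F where "F = {n. \<not> cmod (d n) < 1}"
    have "cmod (d n) \<le> 1 + (\<Sum>n\<in>F. cmod (d n))" for n
    proof (cases "n \<in> F")
      case True
      then have "cmod (d n) \<le> (\<Sum>n\<in>F. cmod (d n))" using fin unfolding F_def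
        by (intro member_le_sum) auto
      then show ?thesis by simp
    next
      case False
      then have "cmod (d n) < 1" unfolding F_def by simp
      moreover have "0 \<le> (\<Sum>n\<in>F. cmod (d n))" by (simp add: sum_nonneg)
      ultimately show ?thesis by simp
    qed
    then show thesis by (rule that)
  qed
  obtain n0 where n0: "u n0 \<noteq> 0" using u(2) by auto
  define nu where "nu = (\<Sum>\<^sub>\<infinity>n. (cmod (u n))\<^sup>2)"
  have nu: "nu > 0" unfolding nu_def
    by (rule infsum_pos_elem[of _ n0]) (use u n0 in \<open>auto simp: l2Z_iff\<close>)
  define v where "v = (\<lambda>n. complex_of_real (1 / sqrt nu) * u n)"
  have v: "v \<in> l2Z" unfolding v_def by (rule l2_cmult[OF u(1)])
  have vn: "(\<Sum>\<^sub>\<infinity>n. (cmod (v n))\<^sup>2) = 1"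
  proof -
    have "(\<Sum>\<^sub>\<infinity>n. (cmod (v n))\<^sup>2) = (\<Sum>\<^sub>\<infinity>n. (1 / nu) * (cmod (u n))\<^sup>2)"
    proof (rule infsum_cong)
      fix n
      have "cmod (v n) = cmod (u n) / sqrt nu" unfolding v_def using nu by (simp add: norm_mult norm_divide)
      then show "(cmod (v n))\<^sup>2 = (1 / nu) * (cmod (u n))\<^sup>2" using nu by (simp add: power_divide)
    qed
    also have "\<dots> = (1 / nu) * nu" unfolding nu_def
      by (rule infsum_cmult_right) (use u in \<open>simp add: l2Z_iff\<close>)
    finally show ?thesis using nu by simp
  qed
  have veig: "jacobi d v = (\<lambda>n. mu * v n)"
  proof
    fix n
    have "u (n - 1) + d n * u n + u (n + 1) = mu * u n" using fun_cong[OF eig, of n] by (simp add: jacobi_def)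
    then have "complex_of_real (1 / sqrt nu) * (u (n - 1) + d n * u n + u (n + 1)) = complex_of_real (1 / sqrt nu) * (mu * u n)"
      by simp
    then show "jacobi d v n = mu * v n" unfolding jacobi_def v_def by (simp add: algebra_simps)
  qed
  have vn0: "v n0 \<noteq> 0" unfolding v_def using n0 nu by simp
  have key: "(mu - cnj mu - d n + cnj (d n)) * v n = 0" for n
  proof (rule ccontr)
    assume "\<not> ?thesis"
    then have "mu \<in> interior (numrange d)" by (rule interior_lemma[OF dB v vn veig])
    then show False using nint by simp
  qed
  have key2: "v n = 0" if "Im (d n) \<noteq> Im mu" for n
  proof -
    have i: "Im (mu - cnj mu - d n + cnj (d n)) = 2 * Im mu - 2 * Im (d n)" by simp
    have "mu - cnj mu - d n + cnj (d n) \<noteq> 0"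
    proof
      assume "mu - cnj mu - d n + cnj (d n) = 0"
      then have "Im (mu - cnj mu - d n + cnj (d n)) = 0" by simp
      then show False using i that by linarith
    qed
    then show ?thesis using key[of n] by simp
  qed
  have vrec: "v (n - 1) + v (n + 1) = (mu - d n) * v n" for n
    using fun_cong[OF veig, of n] by (simp add: jacobi_def algebra_simps)
  show False
  proof (cases "Im mu = 0")
    case False
    have "eventually (\<lambda>n. cmod (d n) < \<bar>Im mu\<bar>) cofinite"
      by (rule order_tendstoD(2)[OF dnorm]) (use False in simp)
    then have fin: "finite {n. \<not> cmod (d n) < \<bar>Im mu\<bar>}" by (simp add: eventually_cofinite)
    obtain m where m: "\<And>n. n \<in> {n. \<not> cmod (d n) < \<bar>Im mu\<bar>} \<Longrightarrow> n < m"
      using finite_int_bound[OF fin] by blast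
    have z: "v n = 0" if "n \<ge> m" for n
    proof (rule key2)
      have "cmod (d n) < \<bar>Im mu\<bar>" using m[of n] that by force
      moreover have "\<bar>Im (d n)\<bar> \<le> cmod (d n)" by (rule abs_Im_le_cmod)
      ultimately show "Im (d n) \<noteq> Im mu" by auto
    qed
    have "v n0 = 0" by (rule zero_prop[of v "\<lambda>n. mu - d n", OF vrec z z]) auto
    then show False using vn0 by simp
  next
    case True
    define r where "r = Re mu"
    define V where "V = (\<lambda>n. Re (d n))"
    have dv: "d n * v n = complex_of_real (V n) * v n" for n
    proof (cases "v n = 0")
      case False
      then have "Im (d n) = 0" using key2[of n] True by auto
      then have "d n = complex_of_real (V n)" unfolding V_def by (simp add: complex_eq_iff)
      then show ?thesis by simp
    qed simp
    have mur: "mu = complex_of_real r" unfolding r_def using True by (simp add: complex_eq_iff)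
    have vrec': "v (n - 1) + v (n + 1) = complex_of_real (r - V n) * v n" for n
      using vrec[of n] dv[of n] unfolding mur by (simp add: algebra_simps)
    have recR: "Re (v (n - 1)) + Re (v (n + 1)) = (r - V n) * Re (v n)" for n
      using arg_cong[OF vrec'[of n], of Re] by simp
    have recI: "Im (v (n - 1)) + Im (v (n + 1)) = (r - V n) * Im (v n)" for n
      using arg_cong[OF vrec'[of n], of Im] by simp
    have sV: "(\<lambda>k. \<bar>real_of_int k\<bar> * \<bar>V k\<bar>) summable_on UNIV" using assms(4) unfolding V_def .
    have Z: "v n = 0" if "n \<in> {n. Im (d n) \<noteq> 0}" for n using key2[of n] that True by simp
    have R: "Re (v n) = 0" for n
      by (rule realprop_apply[of "\<lambda>n. Re (v n)" r V v, OF recR _ v sV assms(3) Z]) (simp add: abs_Re_le_cmod)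
    have I: "Im (v n) = 0" for n
      by (rule realprop_apply[of "\<lambda>n. Im (v n)" r V v, OF recI _ v sV assms(3) Z]) (simp add: abs_Im_le_cmod)
    have "v n0 = 0" using R[of n0] I[of n0] by (simp add: complex_eq_iff)
    then show False using vn0 by simp
  qed
qed

end
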